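(* Fix a measurable $g:\mathcal X\to\mathbb R$ and a loss $\ell:\mathbb R\to\mathbb R_+$ with all second moments below finite, and assume $V:=\mathrm{Var}_{x\sim p}(\ell(-g(x)))>0$. Let $\mathcal D_{\mathrm c}=\{(x_{\mathrm c,i},r_i)\}_{i=1}^{n_{\mathrm c}}$ be i.i.d. from $q$ and $\mathcal D_{\mathrm u}=\{x_{\mathrm u,i}\}_{i=1}^{n_{\mathrm u}}$ be i.i.d. from $p$, independent of $\mathcal D_{\mathrm c}$. For $\beta\in[0,1]$ define the estimator $$\hat R_{\mathrm{SC},\ell}(g)=\frac1{n_{\mathrm c}}\sum_{i=1}^{n_{\mathrm c}}r_i\big(\ell(g(x_{\mathrm c,i}))-\ell(-g(x_{\mathrm c,i}))\big)+(1-\beta)\frac1{n_{\mathrm c}}\sum_{i=1}^{n_{\mathrm c}}\ell(-g(x_{\mathrm c,i}))+\beta\frac1{n_{\mathrm u}}\sum_{i=1}^{n_{\mathrm u}}\ell(-g(x_{\mathrm u,i})).$$ Let $\sigma_{\mathrm{cov}}$ be the covariance between $n_{\mathrm c}^{-1}\sum_{i=1}^{n_{\mathrm c}}r_i\{\ell(g(x_{\mathrm c,i}))-\ell(-g(x_{\mathrm c,i}))\}$ and $n_{\mathrm c}^{-1}\sum_{i=1}^{n_{\mathrm c}}\ell(-g(x_{\mathrm c,i}))$. Then, over $\beta\in[0,1]$, the variance of $\hat R_{\mathrm{SC},\ell}(g)$ is minimized at $$\beta=\mathrm{clip}_{[0,1]}\Big(\frac{n_{\mathrm u}}{n_{\mathrm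 c}+n_{\mathrm u}}+\frac{\sigma_{\mathrm{cov}}}{V}\cdot\frac{n_{\mathrm c}n_{\mathrm u}}{n_{\mathrm c}+n_{\mathrm u}}\Big),$$ where $\mathrm{clip}_{[l,u]}(v)=\max\{l,\min\{v,u\}\}$.
   Context: Let $\mathcal X$ be a measurable space. Let $p_{\mathrm{opt}}$ and $p_{\mathrm{non}}$ be probability densities on $\mathcal X$, $\alpha\in(0,1)$, $p=\alpha p_{\mathrm{opt}}+(1-\alpha)p_{\mathrm{non}}$. The confidence score is $r(x)=\alpha p_{\mathrm{opt}}(x)/p(x)\in[0,1]$. The distribution $q$ is the joint law of $(x,r)$ where $x\sim p$ and $r=r(x)$. *)

theory Defs
  imports "HOL-Probability.Probability"
begin

definition clip :: "real \<Rightarrow> real \<Rightarrow> real \<Rightarrow> real" where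
  "clip l u v = max l (min v u)"

definition covariance :: "'w measure \<Rightarrow> ('w \<Rightarrow> real) \<Rightarrow> ('w \<Rightarrow> real) \<Rightarrow> real" where
  "covariance M X Y =
     (\<integral>w. (X w - (\<integral>v. X v \<partial>M)) * (Y w - (\<integral>v. Y v \<partial>M)) \<partial>M)"

definition mix_density :: "real \<Rightarrow> ('a \<Rightarrow> real) \<Rightarrow> ('a \<Rightarrow> real) \<Rightarrow> 'a \<Rightarrow> real" where
  "mix_density \<alpha> p_opt p_non x = \<alpha> * p_opt x + (1 - \<alpha>) * p_non x"

definition conf_score :: "real \<Rightarrow> ('a \<Rightarrow> real) \<Rightarrow> ('a \<Rightarrow> real) \<Rightarrow> 'a \<Rightarrow> real" where
  "conf_score \<alpha> p_opt p_non x = \<alpha> * p_opt x / mix_density \<alpha> p_opt p_non x"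

definition mix_measure :: "'a measure \<Rightarrow> real \<Rightarrow> ('a \<Rightarrow> real) \<Rightarrow> ('a \<Rightarrow> real) \<Rightarrow> 'a measure" where
  "mix_measure \<mu> \<alpha> p_opt p_non = density \<mu> (\<lambda>x. ennreal (mix_density \<alpha> p_opt p_non x))"

text \<open>The SC estimator; D_c given by sample points xc i (i < nc) with confidences r(xc i),
  D_u by xu i (i < nu).\<close>
definition R_SC :: "(real \<Rightarrow> real) \<Rightarrow> ('a \<Rightarrow> real) \<Rightarrow> ('a \<Rightarrow> real) \<Rightarrow> real \<Rightarrow> nat \<Rightarrow> nat
     \<Rightarrow> (nat \<Rightarrow> 'a) \<Rightarrow> (nat \<Rightarrow> 'a) \<Rightarrow> real" where
  "R_SC loss g r \<beta> nc nu xc xu =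
     (\<Sum>i<nc. r (xc i) * (loss (g (xc i)) - loss (- g (xc i)))) / nc
     + (1 - \<beta>) * ((\<Sum>i<nc. loss (- g (xc i))) / nc)
     + \<beta> * ((\<Sum>i<nu. loss (- g (xu i))) / nu)"

end

theory Submission
  imports Defs
begin


lemma L2_mult_integrable:
  fixes u w :: "'a \<Rightarrow> real"
  assumes [measurable]: "u \<in> borel_measurable M" "w \<in> borel_measurable M"
    and "integrable M (\<lambda>x. (u x)^2)" "integrable M (\<lambda>x. (w x)^2)"
  shows "integrable M (\<lambda>x. u x * w x)"
proof (rule Bochner_Integration.integrable_bound[of _ "\<lambda>x. (u x)^2 + (w x)^2"])
  show "integrable M (\<lambda>x. (u x)^2 + (w x)^2)" using assms by auto
  show "(\<lambda>x. u x * w x) \<in> borel_measurable M" by measurable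
  show "AE x in M. norm (u x * w x) \<le> norm ((u x)^2 + (w x)^2)"
  proof (rule AE_I2)
    fix x
    have "0 \<le> (\<bar>u x\<bar> - \<bar>w x\<bar>)^2" by simp
    hence "2 * (\<bar>u x\<bar> * \<bar>w x\<bar>) \<le> (u x)^2 + (w x)^2"
      by (simp add: power2_eq_square algebra_simps)
    moreover have "0 \<le> \<bar>u x\<bar> * \<bar>w x\<bar>" by simp
    ultimately have "\<bar>u x * w x\<bar> \<le> (u x)^2 + (w x)^2"
      unfolding abs_mult by linarith
    moreover have "0 \<le> (u x)^2 + (w x)^2" by simp
    ultimately show "norm (u x * w x) \<le> norm ((u x)^2 + (w x)^2)"
      by simp
  qed
qed

lemma (in finite_measure) sq_shift:
  fixes u :: "'a \<Rightarrow> real"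
  assumes [measurable]: "u \<in> borel_measurable M" and "integrable M (\<lambda>x. (u x)^2)"
  shows "integrable M (\<lambda>x. (u x - c)^2)"
proof -
  have "integrable M u" by (rule square_integrable_imp_integrable[OF _ assms(2)]) measurable
  then have "integrable M (\<lambda>x. (u x)^2 - 2 * c * u x + c^2)"
    using assms by auto
  then show ?thesis by (simp add: power2_diff algebra_simps)
qed

lemma (in prob_space) cov_lin:
  fixes u w :: "'a \<Rightarrow> real"
  assumes [measurable]: "u \<in> borel_measurable M" "w \<in> borel_measurable M"
   and u2: "integrable M (\<lambda>x. (u x)^2)" and v2: "integrable M (\<lambda>x. (w x)^2)"
  shows "covariance M (\<lambda>x. a*u x + b*w x) (\<lambda>x. c*u x + d*w x)
     = a*c*covariance M u u + (a*d+b*c)*covariance M u w + b*d*covariance M w w"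
proof -
  have iu: "integrable M u" by (rule square_integrable_imp_integrable[OF _ u2]) measurable
  have iv: "integrable M w" by (rule square_integrable_imp_integrable[OF _ v2]) measurable
  define Eu where "Eu = expectation u"
  define Ev where "Ev = expectation w"
  have m1: "expectation (\<lambda>x. a*u x + b*w x) = a*Eu + b*Ev"
    using iu iv by (simp add: Eu_def Ev_def)
  have m2: "expectation (\<lambda>x. c*u x + d*w x) = c*Eu + d*Ev"
    using iu iv by (simp add: Eu_def Ev_def)
  have su: "integrable M (\<lambda>x. (u x - Eu)^2)" by (rule sq_shift) (use u2 in auto)
  have sv: "integrable M (\<lambda>x. (w x - Ev)^2)" by (rule sq_shift) (use v2 in auto)
  have iuu: "integrable M (\<lambda>x. (u x - Eu) * (u x - Eu))"
    by (rule L2_mult_integrable) (use su in auto)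
  have iuv: "integrable M (\<lambda>x. (u x - Eu) * (w x - Ev))"
    by (rule L2_mult_integrable) (use su sv in auto)
  have ivv: "integrable M (\<lambda>x. (w x - Ev) * (w x - Ev))"
    by (rule L2_mult_integrable) (use sv in auto)
  have pt: "\<And>x. (a*u x + b*w x - (a*Eu + b*Ev)) * (c*u x + d*w x - (c*Eu + d*Ev))
     = a*c*((u x - Eu) * (u x - Eu)) + (a*d+b*c)*((u x - Eu) * (w x - Ev))
       + b*d*((w x - Ev) * (w x - Ev))"
    by (simp add: algebra_simps)
  show ?thesis
    unfolding covariance_def m1 m2 pt
    using iuu iuv ivv by (simp add: Eu_def Ev_def)
qed

lemma (in prob_space) cov_sum:
  fixes X :: "'k \<Rightarrow> 'a \<Rightarrow> 'b" and N P :: "'b measure"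
    and \<phi> \<psi> :: "'k \<Rightarrow> 'b \<Rightarrow> real"
  assumes fin: "finite K"
    and ind: "indep_vars (\<lambda>_. N) X K"
    and law: "\<And>k. k \<in> K \<Longrightarrow> distr M N (X k) = P"
    and \<phi>m: "\<And>k. k \<in> K \<Longrightarrow> \<phi> k \<in> borel_measurable N"
    and \<psi>m: "\<And>k. k \<in> K \<Longrightarrow> \<psi> k \<in> borel_measurable N"
    and \<phi>2: "\<And>k. k \<in> K \<Longrightarrow> integrable P (\<lambda>x. (\<phi> k x)^2)"
    and \<psi>2: "\<And>k. k \<in> K \<Longrightarrow> integrable P (\<lambda>x. (\<psi> k x)^2)"
  shows "covariance M (\<lambda>\<omega>. \<Sum>k\<in>K. \<phi> k (X k \<omega>)) (\<lambda>\<omega>. \<Sum>k\<in>K. \<psi> k (X k \<omega>))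
         = (\<Sum>k\<in>K. covariance P (\<phi> k) (\<psi> k))"
proof -
  have Xm: "X k \<in> measurable M N" if "k \<in> K" for k
    using ind that unfolding indep_vars_def by auto
  have tr_int: "integrable M (\<lambda>\<omega>. f (X k \<omega>)) \<longleftrightarrow> integrable P f"
    if "k \<in> K" "f \<in> borel_measurable N" for k and f :: "'b \<Rightarrow> real"
    using integrable_distr_eq[OF Xm[OF that(1)] that(2)] law[OF that(1)] by simp
  have tr_eq: "(\<integral>\<omega>. f (X k \<omega>) \<partial>M) = (\<integral>x. f x \<partial>P)"
    if "k \<in> K" "f \<in> borel_measurable N" for k and f :: "'b \<Rightarrow> real"
    using integral_distr[OF Xm[OF that(1)] that(2)] law[OF that(1)] by simp
  define m\<phi> where "m\<phi> k = (\<integral>x. \<phi> k x \<partial>P)" for k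
  define m\<psi> where "m\<psi> k = (\<integral>x. \<psi> k x \<partial>P)" for k
  define A where "A k \<omega> = \<phi> k (X k \<omega>) - m\<phi> k" for k \<omega>
  define B where "B k \<omega> = \<psi> k (X k \<omega>) - m\<psi> k" for k \<omega>
  have Am: "A k \<in> borel_measurable M" if "k \<in> K" for k
    unfolding A_def using Xm[OF that] \<phi>m[OF that] by measurable
  have Bm: "B k \<in> borel_measurable M" if "k \<in> K" for k
    unfolding B_def using Xm[OF that] \<psi>m[OF that] by measurable
  have \<phi>X2: "integrable M (\<lambda>\<omega>. (\<phi> k (X k \<omega>))^2)" if "k \<in> K" for k
    using tr_int[OF that, of "\<lambda>x. (\<phi> k x)^2"] \<phi>2[OF that] \<phi>m[OF that] by simp
  have \<psi>X2: "integrable M (\<lambda>\<omega>. (\<psi> k (X k \<omega>))^2)" if "k \<in> K" for k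
    using tr_int[OF that, of "\<lambda>x. (\<psi> k x)^2"] \<psi>2[OF that] \<psi>m[OF that] by simp
  have \<phi>X: "integrable M (\<lambda>\<omega>. \<phi> k (X k \<omega>))" if "k \<in> K" for k
    by (rule square_integrable_imp_integrable[OF _ \<phi>X2[OF that]])
      (use Xm[OF that] \<phi>m[OF that] in measurable)
  have \<psi>X: "integrable M (\<lambda>\<omega>. \<psi> k (X k \<omega>))" if "k \<in> K" for k
    by (rule square_integrable_imp_integrable[OF _ \<psi>X2[OF that]])
      (use Xm[OF that] \<psi>m[OF that] in measurable)
  have A2: "integrable M (\<lambda>\<omega>. (A k \<omega>)^2)" if "k \<in> K" for k
    unfolding A_def by (rule sq_shift[OF _ \<phi>X2[OF that]]) (use Xm[OF that] \<phi>m[OF that] in measurable)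
  have B2: "integrable M (\<lambda>\<omega>. (B k \<omega>)^2)" if "k \<in> K" for k
    unfolding B_def by (rule sq_shift[OF _ \<psi>X2[OF that]]) (use Xm[OF that] \<psi>m[OF that] in measurable)
  have EA: "expectation (A k) = 0" if "k \<in> K" for k
    unfolding A_def using \<phi>X[OF that] tr_eq[OF that \<phi>m[OF that]] by (simp add: m\<phi>_def prob_space)
  have EB: "expectation (B k) = 0" if "k \<in> K" for k
    unfolding B_def using \<psi>X[OF that] tr_eq[OF that \<psi>m[OF that]] by (simp add: m\<psi>_def prob_space)
  have E1: "expectation (\<lambda>\<omega>. \<Sum>k\<in>K. \<phi> k (X k \<omega>)) = (\<Sum>k\<in>K. m\<phi> k)"
    using \<phi>X tr_eq \<phi>m by (simp add: m\<phi>_def)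
  have E2: "expectation (\<lambda>\<omega>. \<Sum>k\<in>K. \<psi> k (X k \<omega>)) = (\<Sum>k\<in>K. m\<psi> k)"
    using \<psi>X tr_eq \<psi>m by (simp add: m\<psi>_def)
  have pt: "((\<Sum>k\<in>K. \<phi> k (X k \<omega>)) - (\<Sum>k\<in>K. m\<phi> k)) * ((\<Sum>k\<in>K. \<psi> k (X k \<omega>)) - (\<Sum>k\<in>K. m\<psi> k))
      = (\<Sum>k\<in>K. \<Sum>l\<in>K. A k \<omega> * B l \<omega>)" for \<omega>
    by (simp add: A_def B_def sum_subtractf[symmetric] sum_product)
  have ABint: "integrable M (\<lambda>\<omega>. A k \<omega> * B l \<omega>)" if "k \<in> K" "l \<in> K" for k l
    by (rule L2_mult_integrable[OF Am[OF that(1)] Bm[OF that(2)] A2[OF that(1)] B2[OF that(2)]])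
  have val: "expectation (\<lambda>\<omega>. A k \<omega> * B l \<omega>) = (if k = l then covariance P (\<phi> k) (\<psi> k) else 0)"
    if "k \<in> K" "l \<in> K" for k l
  proof (cases "k = l")
    case True
    have "expectation (\<lambda>\<omega>. A k \<omega> * B k \<omega>) = (\<integral>x. (\<phi> k x - m\<phi> k) * (\<psi> k x - m\<psi> k) \<partial>P)"
      unfolding A_def B_def
      by (rule tr_eq[OF that(1), of "\<lambda>x. (\<phi> k x - m\<phi> k) * (\<psi> k x - m\<psi> k)"])
        (use \<phi>m[OF that(1)] \<psi>m[OF that(1)] in measurable)
    then show ?thesis using True by (simp add: covariance_def m\<phi>_def m\<psi>_def)
  next
    case False
    have ir: "indep_var (PiM {k} (\<lambda>_. N)) (\<lambda>\<omega>. restrict (\<lambda>i. X i \<omega>) {k})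
                        (PiM {l} (\<lambda>_. N)) (\<lambda>\<omega>. restrict (\<lambda>i. X i \<omega>) {l})"
      by (rule indep_var_restrict[OF ind]) (use that False in auto)
    have m1: "(\<lambda>f. \<phi> k (f k) - m\<phi> k) \<in> borel_measurable (PiM {k} (\<lambda>_. N))"
      using \<phi>m[OF that(1)] by measurable
    have m2: "(\<lambda>f. \<psi> l (f l) - m\<psi> l) \<in> borel_measurable (PiM {l} (\<lambda>_. N))"
      using \<psi>m[OF that(2)] by measurable
    have "indep_var borel ((\<lambda>f. \<phi> k (f k) - m\<phi> k) \<circ> (\<lambda>\<omega>. restrict (\<lambda>i. X i \<omega>) {k}))
                    borel ((\<lambda>f. \<psi> l (f l) - m\<psi> l) \<circ> (\<lambda>\<omega>. restrict (\<lambda>i. X i \<omega>) {l}))"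
      by (rule indep_var_compose[OF ir m1 m2])
    then have iv: "indep_var borel (A k) borel (B l)"
      by (simp add: comp_def A_def[abs_def] B_def[abs_def])
    have iA: "integrable M (A k)"
      unfolding A_def using \<phi>X[OF that(1)] by simp
    have iB: "integrable M (B l)"
      unfolding B_def using \<psi>X[OF that(2)] by simp
    show ?thesis using indep_var_lebesgue_integral[OF iv iA iB] EA[OF that(1)] EB[OF that(2)] False
      by simp
  qed
  have "covariance M (\<lambda>\<omega>. \<Sum>k\<in>K. \<phi> k (X k \<omega>)) (\<lambda>\<omega>. \<Sum>k\<in>K. \<psi> k (X k \<omega>))
      = expectation (\<lambda>\<omega>. \<Sum>k\<in>K. \<Sum>l\<in>K. A k \<omega> * B l \<omega>)"
    unfolding covariance_def E1 E2 pt ..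
  also have "\<dots> = (\<Sum>k\<in>K. \<Sum>l\<in>K. expectation (\<lambda>\<omega>. A k \<omega> * B l \<omega>))"
    using ABint by (simp add: Bochner_Integration.integral_sum)
  also have "\<dots> = (\<Sum>k\<in>K. \<Sum>l\<in>K. (if k = l then covariance P (\<phi> k) (\<psi> k) else 0))"
    using val by simp
  also have "\<dots> = (\<Sum>k\<in>K. covariance P (\<phi> k) (\<psi> k))"
    using fin by simp
  finally show ?thesis .
qed



lemma quad_min:
  fixes Vaa Vab V na nb \<beta> :: real
  assumes V: "V > 0" and na: "na > 0" and nb: "nb > 0" and b: "0 \<le> \<beta>" "\<beta> \<le> 1"
  defines "F \<equiv> \<lambda>b. na * (1/na * (1/na) * Vaa + (1/na * ((1-b)/na) + (1-b)/na * (1/na)) * Vab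
                  + (1-b)/na * ((1-b)/na) * V)
               + nb * (0 * 0 * Vaa + (0 * (b/nb) + b/nb * 0) * Vab + b/nb * (b/nb) * V)"
  defines "m \<equiv> nb/(na+nb) + (Vab/na)/V * (na*nb/(na+nb))"
  shows "F (clip 0 1 m) \<le> F \<beta>"
proof -
  define c where "c = V/na + V/nb"
  define K where "K = Vaa/na + 2*Vab/na + V/na"
  have hcm: "c * m = (Vab+V)/na"
  proof -
    define S where "S = na + nb"
    have s: "S > 0" using na nb by (simp add: S_def)
    have c': "V/na + V/nb = V*S/(na*nb)"
      unfolding S_def using na nb by (simp add: field_simps)
    have t1: "V*S/(na*nb)*(nb/S) = V/na"
      using s na nb by (simp add: field_simps)
    have t2: "V*S/(na*nb)*((Vab/na)/V*(na*nb/S)) = Vab/na"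
      using s na nb V by (simp add: field_simps)
    show ?thesis unfolding c_def m_def c' S_def[symmetric] distrib_left t1 t2
      by (simp add: add_divide_distrib)
  qed
  have G: "F x = K - 2*x*((Vab+V)/na) + c*x^2" for x
    unfolding F_def K_def c_def using V na nb
    by (simp add: field_simps power2_eq_square)
  have key: "F x = (K - c*m^2) + c*(x-m)^2" for x
    unfolding G hcm[symmetric] by (simp add: power2_eq_square algebra_simps)
  have "\<bar>clip 0 1 m - m\<bar> \<le> \<bar>\<beta> - m\<bar>"
    using b by (auto simp: clip_def)
  then have "(clip 0 1 m - m)^2 \<le> (\<beta> - m)^2" by (simp add: abs_le_square_iff)
  moreover have "c > 0" using V na nb by (simp add: c_def add_pos_pos)
  ultimately show ?thesis
    by (subst (1 2) key) (simp add: mult_left_mono)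
qed



theorem proposition1:
  fixes \<mu> :: "'a measure" and \<Omega> :: "'w measure"
    and p_opt p_non :: "'a \<Rightarrow> real" and \<alpha> :: real
    and g :: "'a \<Rightarrow> real" and loss :: "real \<Rightarrow> real"
    and nc nu :: nat
    and xc xu :: "nat \<Rightarrow> 'w \<Rightarrow> 'a"
  assumes alpha: "0 < \<alpha>" "\<alpha> < 1"
    and p_opt_meas: "p_opt \<in> borel_measurable \<mu>" and p_opt_nonneg: "\<And>x. 0 \<le> p_opt x"
    and p_opt_prob: "prob_space (density \<mu> (\<lambda>x. ennreal (p_opt x)))"
    and p_non_meas: "p_non \<in> borel_measurable \<mu>" and p_non_nonneg: "\<And>x. 0 \<le> p_non x"
    and p_non_prob: "prob_space (density \<mu> (\<lambda>x. ennreal (p_non x)))"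
    and g_meas: "g \<in> borel_measurable \<mu>"
    and loss_meas: "loss \<in> borel_measurable borel"
    and loss_nonneg: "\<And>t. 0 \<le> loss t"
    and mom_pos: "integrable (mix_measure \<mu> \<alpha> p_opt p_non) (\<lambda>x. (loss (g x))\<^sup>2)"
    and mom_neg: "integrable (mix_measure \<mu> \<alpha> p_opt p_non) (\<lambda>x. (loss (- g x))\<^sup>2)"
    and V_pos: "prob_space.variance (mix_measure \<mu> \<alpha> p_opt p_non) (\<lambda>x. loss (- g x)) > 0"
    and nc_pos: "0 < nc" and nu_pos: "0 < nu"
    and Omega: "prob_space \<Omega>"
    and indep: "prob_space.indep_vars \<Omega> (\<lambda>_. \<mu>)
                  (\<lambda>k. case k of Inl i \<Rightarrow> xc i | Inr j \<Rightarrow> xu j) ({..<nc} <+> {..<nu})"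
    and xc_law: "\<And>i. i < nc \<Longrightarrow> distr \<Omega> \<mu> (xc i) = mix_measure \<mu> \<alpha> p_opt p_non"
    and xu_law: "\<And>j. j < nu \<Longrightarrow> distr \<Omega> \<mu> (xu j) = mix_measure \<mu> \<alpha> p_opt p_non"
  shows "let P = mix_measure \<mu> \<alpha> p_opt p_non;
             r = conf_score \<alpha> p_opt p_non;
             V = prob_space.variance P (\<lambda>x. loss (- g x));
             \<sigma>cov = covariance \<Omega>
                     (\<lambda>\<omega>. (\<Sum>i<nc. r (xc i \<omega>) * (loss (g (xc i \<omega>)) - loss (- g (xc i \<omega>)))) / nc)
                     (\<lambda>\<omega>. (\<Sum>i<nc. loss (- g (xc i \<omega>))) / nc);
             \<beta>opt = clip 0 1 (real nu / (real nc + real nu)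
                       + \<sigma>cov / V * (real nc * real nu / (real nc + real nu)))
         in \<forall>\<beta>\<in>{0..1}.
              prob_space.variance \<Omega> (\<lambda>\<omega>. R_SC loss g r \<beta>opt nc nu (\<lambda>i. xc i \<omega>) (\<lambda>j. xu j \<omega>))
              \<le> prob_space.variance \<Omega> (\<lambda>\<omega>. R_SC loss g r \<beta> nc nu (\<lambda>i. xc i \<omega>) (\<lambda>j. xu j \<omega>))"

proof -
  define P where "P = mix_measure \<mu> \<alpha> p_opt p_non"
  define r where "r = conf_score \<alpha> p_opt p_non"
  define fa where "fa = (\<lambda>x. r x * (loss (g x) - loss (- g x)))"
  define fb where "fb = (\<lambda>x. loss (- g x))"
  define K where "K = {..<nc} <+> {..<nu}"
  define X where "X = (\<lambda>k. case k of Inl i \<Rightarrow> xc i | Inr j \<Rightarrow> xu j)"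
  interpret \<Omega>: prob_space \<Omega> by (rule Omega)
  have finK: "finite K" by (simp add: K_def)
  have ind: "\<Omega>.indep_vars (\<lambda>_. \<mu>) X K" using indep by (simp add: X_def K_def)
  have law: "distr \<Omega> \<mu> (X k) = P" if "k \<in> K" for k
    using that xc_law xu_law by (auto simp: K_def X_def P_def)
  have I0: "Inl 0 \<in> K" using nc_pos by (simp add: K_def Plus_def)
  have X0: "X (Inl 0) \<in> measurable \<Omega> \<mu>"
    using ind I0 unfolding \<Omega>.indep_vars_def by auto
  have "prob_space P"
    using \<Omega>.prob_space_distr[OF X0] law[OF I0] by simp
  then interpret P: prob_space P .
  have setsP: "sets P = sets \<mu>" by (simp add: P_def mix_measure_def)
  have measP: "measurable P borel = measurable \<mu> borel"
    by (rule measurable_cong_sets[OF setsP refl])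
  have rm: "r \<in> borel_measurable \<mu>"
    unfolding r_def conf_score_def[abs_def] mix_density_def using p_opt_meas p_non_meas by measurable
  have fam: "fa \<in> borel_measurable \<mu>"
    unfolding fa_def using rm g_meas loss_meas by measurable
  have fbm: "fb \<in> borel_measurable \<mu>"
    unfolding fb_def using g_meas loss_meas by measurable
  have famP: "fa \<in> borel_measurable P" unfolding measP by (rule fam)
  have fbmP: "fb \<in> borel_measurable P" unfolding measP by (rule fbm)
  have r01: "0 \<le> r x \<and> r x \<le> 1" for x
  proof -
    have a: "0 \<le> \<alpha> * p_opt x" using alpha p_opt_nonneg[of x] by simp
    have b: "0 \<le> (1 - \<alpha>) * p_non x" using alpha p_non_nonneg[of x] by simp
    show ?thesis unfolding r_def conf_score_def mix_density_def
      using a b by (auto simp: divide_le_eq_1)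
  qed
  have fb2: "integrable P (\<lambda>x. (fb x)^2)" using mom_neg by (simp add: fb_def P_def)
  have fa2: "integrable P (\<lambda>x. (fa x)^2)"
  proof (rule Bochner_Integration.integrable_bound[of _ "\<lambda>x. (loss (g x))^2 + (loss (- g x))^2"])
    show "integrable P (\<lambda>x. (loss (g x))\<^sup>2 + (loss (- g x))\<^sup>2)"
      using mom_pos mom_neg by (simp add: P_def)
    show "(\<lambda>x. (fa x)^2) \<in> borel_measurable P" using famP by measurable
    show "AE x in P. norm ((fa x)^2) \<le> norm ((loss (g x))\<^sup>2 + (loss (- g x))\<^sup>2)"
    proof (rule AE_I2)
      fix x
      define a where "a = loss (g x)"
      define b where "b = loss (- g x)"
      have a0: "0 \<le> a" "0 \<le> b" using loss_nonneg by (simp_all add: a_def b_def)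
      have "\<bar>r x * (a - b)\<bar> \<le> \<bar>a - b\<bar>"
        using r01[of x] by (simp add: abs_mult mult_left_le_one_le)
      then have "(r x * (a - b))^2 \<le> (a - b)^2" by (simp add: abs_le_square_iff)
      also have "\<dots> \<le> a^2 + b^2" using a0 by (simp add: power2_diff)
      finally show "norm ((fa x)^2) \<le> norm ((loss (g x))\<^sup>2 + (loss (- g x))\<^sup>2)"
        by (simp add: fa_def a_def b_def)
    qed
  qed
  define Vaa where "Vaa = covariance P fa fa"
  define Vab where "Vab = covariance P fa fb"
  define Vbb where "Vbb = covariance P fb fb"
  have gen: "covariance \<Omega> (\<lambda>\<omega>. \<Sum>k\<in>K. ca k * fa (X k \<omega>) + cb k * fb (X k \<omega>))
                         (\<lambda>\<omega>. \<Sum>k\<in>K. da k * fa (X k \<omega>) + db k * fb (X k \<omega>))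
     = (\<Sum>k\<in>K. ca k * da k * Vaa + (ca k * db k + cb k * da k) * Vab + cb k * db k * Vbb)"
    for ca cb da db :: "nat + nat \<Rightarrow> real"
  proof -
    have fab: "integrable P (\<lambda>x. fa x * fb x)"
      by (rule L2_mult_integrable[OF famP fbmP fa2 fb2])
    have sq: "integrable P (\<lambda>x. (a * fa x + b * fb x)^2)" for a b
    proof -
      have "integrable P (\<lambda>x. a^2 * (fa x)^2 + 2*a*b*(fa x * fb x) + b^2*(fb x)^2)"
        using fa2 fb2 fab by auto
      moreover have "(\<lambda>x. (a * fa x + b * fb x)^2)
          = (\<lambda>x. a^2 * (fa x)^2 + 2*a*b*(fa x * fb x) + b^2*(fb x)^2)"
        by (simp add: fun_eq_iff power2_eq_square algebra_simps)
      ultimately show ?thesis by simp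
    qed
    have "covariance \<Omega> (\<lambda>\<omega>. \<Sum>k\<in>K. ca k * fa (X k \<omega>) + cb k * fb (X k \<omega>))
                         (\<lambda>\<omega>. \<Sum>k\<in>K. da k * fa (X k \<omega>) + db k * fb (X k \<omega>))
       = (\<Sum>k\<in>K. covariance P (\<lambda>x. ca k * fa x + cb k * fb x) (\<lambda>x. da k * fa x + db k * fb x))"
      apply (rule \<Omega>.cov_sum[OF finK ind law, where \<phi> = "\<lambda>k x. ca k * fa x + cb k * fb x"
            and \<psi> = "\<lambda>k x. da k * fa x + db k * fb x"])
      using fam fbm sq by auto
    also have "\<dots> = (\<Sum>k\<in>K. ca k * da k * Vaa + (ca k * db k + cb k * da k) * Vab + cb k * db k * Vbb)"
      by (simp add: P.cov_lin[OF famP fbmP fa2 fb2] Vaa_def Vab_def Vbb_def)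
    finally show ?thesis .
  qed
  define cA where "cA = (\<lambda>k::nat+nat. (case k of Inl _ \<Rightarrow> 1 / real nc | Inr _ \<Rightarrow> (0::real)))"
  define z where "z = (\<lambda>k::nat+nat. 0::real)"
  define dR where "dR (b::real) = (\<lambda>k::nat+nat. (case k of Inl _ \<Rightarrow> (1-b) / real nc | Inr _ \<Rightarrow> b / real nu))" for b
  define Fq where "Fq \<equiv> \<lambda>b. real nc * (1/real nc * (1/real nc) * Vaa + (1/real nc * ((1-b)/real nc) + (1-b)/real nc * (1/real nc)) * Vab
                  + (1-b)/real nc * ((1-b)/real nc) * Vbb)
               + real nu * (0 * 0 * Vaa + (0 * (b/real nu) + b/real nu * 0) * Vab + b/real nu * (b/real nu) * Vbb)"
  have Aeq: "(\<lambda>\<omega>. (\<Sum>i<nc. r (xc i \<omega>) * (loss (g (xc i \<omega>)) - loss (- g (xc i \<omega>)))) / real nc)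
      = (\<lambda>\<omega>. \<Sum>k\<in>K. cA k * fa (X k \<omega>) + z k * fb (X k \<omega>))"
    by (simp add: fun_eq_iff K_def sum.Plus X_def fa_def z_def cA_def sum_divide_distrib)
  have Beq: "(\<lambda>\<omega>. (\<Sum>i<nc. loss (- g (xc i \<omega>))) / real nc)
      = (\<lambda>\<omega>. \<Sum>k\<in>K. z k * fa (X k \<omega>) + cA k * fb (X k \<omega>))"
    by (simp add: fun_eq_iff K_def sum.Plus X_def fb_def z_def cA_def sum_divide_distrib)
  have Req: "(\<lambda>\<omega>. R_SC loss g r b nc nu (\<lambda>i. xc i \<omega>) (\<lambda>j. xu j \<omega>))
      = (\<lambda>\<omega>. \<Sum>k\<in>K. cA k * fa (X k \<omega>) + dR b k * fb (X k \<omega>))" for b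
    by (simp add: fun_eq_iff R_SC_def K_def sum.Plus X_def fa_def fb_def cA_def dR_def
        sum_divide_distrib sum.distrib sum_distrib_left)
  have sig: "covariance \<Omega> (\<lambda>\<omega>. (\<Sum>i<nc. r (xc i \<omega>) * (loss (g (xc i \<omega>)) - loss (- g (xc i \<omega>)))) / real nc)
      (\<lambda>\<omega>. (\<Sum>i<nc. loss (- g (xc i \<omega>))) / real nc) = Vab / real nc"
    unfolding Aeq Beq gen using nc_pos
    by (simp add: K_def sum.Plus z_def cA_def power2_eq_square)
  have Vv: "prob_space.variance P (\<lambda>x. loss (- g x)) = Vbb"
    by (simp add: Vbb_def covariance_def fb_def power2_eq_square)
  have VR: "prob_space.variance \<Omega> (\<lambda>\<omega>. R_SC loss g r b nc nu (\<lambda>i. xc i \<omega>) (\<lambda>j. xu j \<omega>)) = Fq b" for b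
  proof -
    have "prob_space.variance \<Omega> (\<lambda>\<omega>. R_SC loss g r b nc nu (\<lambda>i. xc i \<omega>) (\<lambda>j. xu j \<omega>))
       = covariance \<Omega> (\<lambda>\<omega>. R_SC loss g r b nc nu (\<lambda>i. xc i \<omega>) (\<lambda>j. xu j \<omega>))
           (\<lambda>\<omega>. R_SC loss g r b nc nu (\<lambda>i. xc i \<omega>) (\<lambda>j. xu j \<omega>))"
      by (simp add: covariance_def power2_eq_square)
    also have "\<dots> = Fq b"
      unfolding Req gen by (simp add: K_def sum.Plus cA_def dR_def Fq_def)
    finally show ?thesis .
  qed
  have Vpos: "Vbb > 0" using V_pos Vv by (simp add: P_def)
  show ?thesis
    unfolding Let_def P_def[symmetric] r_def[symmetric] sig Vv VR
  proof
    fix \<beta> :: real assume "\<beta> \<in> {0..1}"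
    then show "Fq (clip 0 1 (real nu / (real nc + real nu) + Vab / real nc / Vbb * (real nc * real nu / (real nc + real nu)))) \<le> Fq \<beta>"
      using quad_min[where V=Vbb and na="real nc" and nb="real nu" and Vaa=Vaa and Vab=Vab and \<beta>=\<beta>]
        Vpos nc_pos nu_pos unfolding Fq_def by simp
  qed
qed


end
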